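(* Let $Q$ be a Moufang loop with trivial nucleus. Then the assignment $\sigma(L_x)=R_x$, $\sigma(L_x^{-1})=R_x^{-1}$, $\sigma(R_x)=M_x^{-1}$, $\sigma(R_x^{-1})=M_x$ (for $x\in Q$, where $M_x=R_xL_x$) defines a well-defined mapping $\sigma:\{L_x,R_x,L_x^{-1},R_x^{-1}:x\in Q\}\to\mathrm{Mlt}(Q)$.
   Context: A loop is a magma with identity $1$ in which the left translations $L_x(y)=xy$ and right translations $R_x(y)=yx$ are bijections; it is Moufang if it satisfies $xy\cdot zx=(x\cdot yz)x$. $\mathrm{Mlt}(Q)$ is the permutation group generated by all $L_x,R_x$. The nucleus is the set of $x$ with $x(yz)=(xy)z$, $y(xz)=(yx)z$, $y(zx)=(yz)x$ for all $y,z$. Well-definedness means that whenever two of the listed permutations coincide, their prescribed images coincide. *)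

theory Defs
  imports Main
begin

definition is_loop :: "('a \<Rightarrow> 'a \<Rightarrow> 'a) \<Rightarrow> 'a \<Rightarrow> bool" where
  "is_loop mult e \<longleftrightarrow>
     (\<forall>x. mult e x = x \<and> mult x e = x) \<and>
     (\<forall>x. bij (mult x)) \<and> (\<forall>x. bij (\<lambda>y. mult y x))"

definition is_moufang :: "('a \<Rightarrow> 'a \<Rightarrow> 'a) \<Rightarrow> bool" where
  "is_moufang mult \<longleftrightarrow>
     (\<forall>x y z. mult (mult x y) (mult z x) = mult (mult x (mult y z)) x)"

definition nucleus :: "('a \<Rightarrow> 'a \<Rightarrow> 'a) \<Rightarrow> 'a set" where
  "nucleus mult = {x. \<forall>y z.
      mult x (mult y z) = mult (mult x y) z \<and>
      mult y (mult x z) = mult (mult y x) z \<and>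
      mult y (mult z x) = mult (mult y z) x}"

definition Lt :: "('a \<Rightarrow> 'a \<Rightarrow> 'a) \<Rightarrow> 'a \<Rightarrow> 'a \<Rightarrow> 'a" where
  "Lt mult x = (\<lambda>y. mult x y)"

definition Rt :: "('a \<Rightarrow> 'a \<Rightarrow> 'a) \<Rightarrow> 'a \<Rightarrow> 'a \<Rightarrow> 'a" where
  "Rt mult x = (\<lambda>y. mult y x)"

text \<open>M_x = R_x L_x (composition; in a Moufang loop L_x and R_x commute).\<close>
definition Mt :: "('a \<Rightarrow> 'a \<Rightarrow> 'a) \<Rightarrow> 'a \<Rightarrow> 'a \<Rightarrow> 'a" where
  "Mt mult x = Rt mult x \<circ> Lt mult x"

inductive_set Mlt :: "('a \<Rightarrow> 'a \<Rightarrow> 'a) \<Rightarrow> ('a \<Rightarrow> 'a) set" for mult where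
  Mlt_L: "Lt mult x \<in> Mlt mult"
| Mlt_R: "Rt mult x \<in> Mlt mult"
| Mlt_id: "id \<in> Mlt mult"
| Mlt_comp: "f \<in> Mlt mult \<Longrightarrow> g \<in> Mlt mult \<Longrightarrow> f \<circ> g \<in> Mlt mult"
| Mlt_inv: "f \<in> Mlt mult \<Longrightarrow> inv f \<in> Mlt mult"

text \<open>The graph of the assignment sigma, as a set of (argument, prescribed image) pairs.\<close>
definition sigma_graph :: "('a \<Rightarrow> 'a \<Rightarrow> 'a) \<Rightarrow> (('a \<Rightarrow> 'a) \<times> ('a \<Rightarrow> 'a)) set" where
  "sigma_graph mult =
     (\<Union>x. {(Lt mult x, Rt mult x),
           (inv (Lt mult x), inv (Rt mult x)),
           (Rt mult x, inv (Mt mult x)),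
           (inv (Rt mult x), Mt mult x)})"

end

theory Submission
  imports Defs
begin

locale mloop =
  fixes mult :: "'a \<Rightarrow> 'a \<Rightarrow> 'a" (infixl "\<cdot>" 70) and e :: 'a
  assumes loop: "is_loop mult e" and mouf: "is_moufang mult"
begin

lemma lid[simp]: "e \<cdot> x = x" using loop unfolding is_loop_def by blast
lemma rid[simp]: "x \<cdot> e = x" using loop unfolding is_loop_def by blast
lemma M: "(x \<cdot> y) \<cdot> (z \<cdot> x) = (x \<cdot> (y \<cdot> z)) \<cdot> x"
  using mouf unfolding is_moufang_def by blast
lemma bijL: "bij (mult x)" using loop unfolding is_loop_def by blast
lemma bijR: "bij (\<lambda>y. y \<cdot> x)" using loop unfolding is_loop_def by blast
lemma lcan: "x \<cdot> y = x \<cdot> z \<Longrightarrow> y = z"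
  using bijL[of x] by (meson bij_is_inj injD)
lemma rcan: "y \<cdot> x = z \<cdot> x \<Longrightarrow> y = z"
  using bijR[of x] bij_is_inj injD by fastforce
lemma flex: "(x \<cdot> z) \<cdot> x = x \<cdot> (z \<cdot> x)"
  using M[of x e z] by simp

definition iv where "iv x = (SOME y. x \<cdot> y = e)"
lemma rinv[simp]: "x \<cdot> iv x = e"
proof -
  have "\<exists>y. x \<cdot> y = e" using bijL[of x] by (metis bij_pointE)
  then show ?thesis unfolding iv_def by (rule someI_ex)
qed
lemma lip1[simp]: "x \<cdot> (iv x \<cdot> z) = z"
proof -
  have "z \<cdot> x = (x \<cdot> (iv x \<cdot> z)) \<cdot> x" using M[of x "iv x" z] by simp
  then show ?thesis using rcan by metis
qed
lemma lip[simp]: "iv x \<cdot> (x \<cdot> y) = y"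
  using lip1[of x "x \<cdot> y"] lcan by metis
lemma linv[simp]: "iv x \<cdot> x = e" using lip[of x e] by simp
lemma ripa[simp]: "(y \<cdot> iv x) \<cdot> x = y"
proof -
  have "x \<cdot> y = x \<cdot> ((y \<cdot> iv x) \<cdot> x)" using M[of x y "iv x"] flex by simp
  then show ?thesis using lcan by metis
qed
lemma rip[simp]: "(y \<cdot> x) \<cdot> iv x = y"
  using ripa[of "y \<cdot> x" x] rcan by metis
lemma iv_unique: "x \<cdot> y = e \<Longrightarrow> y = iv x"
  using rinv[of x] lcan by metis
lemma iv_iv[simp]: "iv (iv a) = a"
  using iv_unique[OF linv[of a]] by simp
lemma aaip: "iv (x \<cdot> y) = iv y \<cdot> iv x"
proof -
  define w where "w = iv (x \<cdot> y)"
  have "iv w = x \<cdot> y" unfolding w_def by simp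
  have "x = iv w \<cdot> iv y" using \<open>iv w = x \<cdot> y\<close> by simp
  then have "w \<cdot> x = iv y" using lip[of "iv w" "iv y"] by simp
  then have "w = iv y \<cdot> iv x" using rip[of w x] by simp
  then show ?thesis unfolding w_def .
qed

lemma comm_cube:
  assumes C: "\<And>z. x \<cdot> z = z \<cdot> x"
    and N: "nucleus mult = {e}"
  shows "x \<cdot> (x \<cdot> (x \<cdot> c)) = c"
proof -
  have i: "(x \<cdot> a) \<cdot> (x \<cdot> b) = x \<cdot> (x \<cdot> (a \<cdot> b))" for a b
    using M[of x a b] C[of b] C[of "x \<cdot> (a \<cdot> b)"] by simp
  have ii: "x \<cdot> (u \<cdot> c) = (u \<cdot> iv x) \<cdot> (x \<cdot> (x \<cdot> c))" for u c
  proof -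
    have "(x \<cdot> iv u) \<cdot> (x \<cdot> (u \<cdot> c)) = x \<cdot> (x \<cdot> c)" using i[of "iv u" "u \<cdot> c"] by simp
    then have "x \<cdot> (u \<cdot> c) = iv (x \<cdot> iv u) \<cdot> (x \<cdot> (x \<cdot> c))" using lip by metis
    then show ?thesis by (simp add: aaip)
  qed
  have iii: "x \<cdot> (c \<cdot> u) = (x \<cdot> (x \<cdot> c)) \<cdot> (u \<cdot> iv x)" for u c
  proof -
    have "(x \<cdot> (c \<cdot> iv (iv u))) \<cdot> (x \<cdot> iv u) = x \<cdot> (x \<cdot> c)"
      using i[of "c \<cdot> iv (iv u)" "iv u"] by simp
    then have "x \<cdot> (c \<cdot> iv (iv u)) = (x \<cdot> (x \<cdot> c)) \<cdot> iv (x \<cdot> iv u)" using rip by metis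
    then show ?thesis by (simp add: aaip)
  qed
  have S: "x \<cdot> (c \<cdot> iv x) = c" for c using C[of "c \<cdot> iv x"] by simp
  have A: "x \<cdot> (x \<cdot> (x \<cdot> u)) \<cdot> c = x \<cdot> (x \<cdot> (x \<cdot> (u \<cdot> c)))" for u c
  proof -
    have "x \<cdot> (x \<cdot> (x \<cdot> u)) \<cdot> c = (x \<cdot> (x \<cdot> (x \<cdot> u))) \<cdot> (x \<cdot> (c \<cdot> iv x))"
      using S[of c] by simp
    also have "\<dots> = x \<cdot> (x \<cdot> ((x \<cdot> (x \<cdot> u)) \<cdot> (c \<cdot> iv x)))" by (rule i)
    also have "(x \<cdot> (x \<cdot> u)) \<cdot> (c \<cdot> iv x) = x \<cdot> (u \<cdot> c)" by (rule iii[symmetric])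
    finally show ?thesis .
  qed
  have B: "u \<cdot> (x \<cdot> (x \<cdot> (x \<cdot> c))) = x \<cdot> (x \<cdot> (x \<cdot> (u \<cdot> c)))" for u c
  proof -
    have "u \<cdot> (x \<cdot> (x \<cdot> (x \<cdot> c))) = (x \<cdot> (u \<cdot> iv x)) \<cdot> (x \<cdot> (x \<cdot> (x \<cdot> c)))"
      using S[of u] by simp
    also have "\<dots> = x \<cdot> (x \<cdot> ((u \<cdot> iv x) \<cdot> (x \<cdot> (x \<cdot> c))))" by (rule i)
    also have "(u \<cdot> iv x) \<cdot> (x \<cdot> (x \<cdot> c)) = x \<cdot> (u \<cdot> c)" by (rule ii[symmetric])
    finally show ?thesis .
  qed
  define d where "d = x \<cdot> (x \<cdot> x)"
  have T1: "x \<cdot> (x \<cdot> (x \<cdot> c)) = d \<cdot> c" for c using A[of e c] unfolding d_def by simp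
  have T2: "x \<cdot> (x \<cdot> (x \<cdot> c)) = c \<cdot> d" for c using B[of c e] unfolding d_def by simp
  have "d \<in> nucleus mult"
    unfolding nucleus_def
  proof (safe)
    fix y z
    show "d \<cdot> (y \<cdot> z) = d \<cdot> y \<cdot> z" using A[of y z] T1 by metis
    show "y \<cdot> (d \<cdot> z) = y \<cdot> d \<cdot> z" using A[of y z] B[of y z] T1 T2 by metis
    show "y \<cdot> (z \<cdot> d) = y \<cdot> z \<cdot> d" using B[of y z] T2 by metis
  qed
  then have "d = e" using N by blast
  then show ?thesis using T1 by simp
qed


lemma iv_unique2: "y \<cdot> x = e \<Longrightarrow> y = iv x"
  using linv[of x] rcan by metis

abbreviation "L \<equiv> Lt mult"
abbreviation "R \<equiv> Rt mult"
abbreviation "MM \<equiv> Mt mult"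

lemma bLt: "bij (L x)" unfolding Lt_def using bijL by simp
lemma bRt: "bij (R x)" unfolding Rt_def using bijR by simp
lemma bMt: "bij (MM x)" unfolding Mt_def using bLt bRt by (simp add: bij_comp)

lemma inv_app: "bij f \<Longrightarrow> inv f (f z) = z" by (simp add: bij_is_inj)

lemma inv_pw: "(\<And>z. f (g z) = z) \<Longrightarrow> (\<And>z. g (f z) = z) \<Longrightarrow> inv f = g"
  by (rule inv_unique_comp) auto

lemma LL: "L x = L y \<Longrightarrow> x = y"
  unfolding Lt_def by (metis rid)
lemma RR: "R x = R y \<Longrightarrow> x = y"
  unfolding Rt_def by (metis lid)

lemma LiL: assumes "L x = inv (L y)" shows "R x = inv (R y)"
proof -
  have "L x (L y e) = e" using assms inv_app[OF bLt] by simp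
  then have "y = iv x" unfolding Lt_def by (simp add: iv_unique)
  show ?thesis unfolding \<open>y = iv x\<close> by (rule sym, rule inv_pw) (simp_all add: Rt_def)
qed

lemma LR: assumes "L x = R y" and N: "nucleus mult = {e}"
  shows "x = y \<and> R x = inv (MM x)"
proof -
  have "x = y" using fun_cong[OF assms(1), of e] by (simp add: Lt_def Rt_def)
  have C: "x \<cdot> z = z \<cdot> x" for z using fun_cong[OF assms(1), of z] \<open>x = y\<close> by (simp add: Lt_def Rt_def)
  have cube: "x \<cdot> (x \<cdot> (x \<cdot> c)) = c" for c using comm_cube[OF C N] .
  have "inv (MM x) = R x"
    by (rule inv_pw) (simp_all add: Mt_def Lt_def Rt_def C[symmetric] cube)
  then show ?thesis using \<open>x = y\<close> by simp
qed

lemma LiR: assumes "L x = inv (R y)" and N: "nucleus mult = {e}"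
  shows "R x = MM y"
proof -
  have h: "x \<cdot> (z \<cdot> y) = z" for z using assms inv_app[OF bRt, of y z] by (simp add: Lt_def Rt_def)
  have "x \<cdot> y = e" using h[of e] by simp
  then have y: "y = iv x" by (rule iv_unique)
  have C: "y \<cdot> z = z \<cdot> y" for z using h[of z] lip1[of x z] lcan unfolding y by metis
  have cube: "y \<cdot> (y \<cdot> (y \<cdot> c)) = c" for c using comm_cube[OF C N] .
  have "y \<cdot> (y \<cdot> c) = c \<cdot> x" for c
  proof -
    have "y \<cdot> (c \<cdot> x) = c" using C[of "c \<cdot> x"] y by simp
    then show ?thesis using cube[of c] lcan by metis
  qed
  then show ?thesis by (auto simp: Mt_def Lt_def Rt_def C[symmetric])
qed

lemma RiR: assumes "R x = inv (R y)" shows "inv (MM x) = MM y"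
proof -
  have h0: "R x (R y z) = z" for z using assms inv_app[OF bRt, of y z] by simp
  have h: "(z \<cdot> y) \<cdot> x = z" for z using h0[of z] by (simp add: Rt_def)
  have "y = iv x" using h[of e] by (simp add: iv_unique2)
  show ?thesis unfolding \<open>y = iv x\<close>
    by (rule inv_pw) (simp_all add: Mt_def Lt_def Rt_def flex)
qed

lemma inv_inv': "inv (inv (L x)) = L x" "inv (inv (R x)) = R x" "inv (inv (MM x)) = MM x"
  by (simp_all add: inv_inv_eq bLt bRt bMt)

lemma inv_eq_swap: "inv (L x) = g \<Longrightarrow> L x = inv g" "inv (R x) = g \<Longrightarrow> R x = inv g"
  using inv_inv' by auto

lemma inv_inj: "inv (L x) = inv (L y) \<Longrightarrow> L x = L y"
  "inv (R x) = inv (R y) \<Longrightarrow> R x = R y"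
  "inv (L x) = inv (R y) \<Longrightarrow> L x = R y"
  "inv (R x) = inv (L y) \<Longrightarrow> R x = L y"
  by (metis inv_inv')+

lemma det:
  assumes N: "nucleus mult = {e}" and "(p, q) \<in> sigma_graph mult" "(p, q') \<in> sigma_graph mult"
  shows "q = q'"
proof -
  obtain x where hx: "(p = L x \<and> q = R x) \<or> (p = inv (L x) \<and> q = inv (R x)) \<or>
      (p = R x \<and> q = inv (MM x)) \<or> (p = inv (R x) \<and> q = MM x)"
    using assms(2) unfolding sigma_graph_def by blast
  obtain y where hy: "(p = L y \<and> q' = R y) \<or> (p = inv (L y) \<and> q' = inv (R y)) \<or>
      (p = R y \<and> q' = inv (MM y)) \<or> (p = inv (R y) \<and> q' = MM y)"
    using assms(3) unfolding sigma_graph_def by blast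
  note F = LL RR LiL LR[OF _ N] LiR[OF _ N] RiR inv_inv' inv_inj
  from hx hy show ?thesis
    apply (elim disjE conjE)
    using F apply metis+
    done
qed

lemma inMlt: "(p, q) \<in> sigma_graph mult \<Longrightarrow> q \<in> Mlt mult"
  unfolding sigma_graph_def Mt_def by (auto intro: Mlt.intros)

end

theorem corollary6p2:
  fixes mult :: "'a \<Rightarrow> 'a \<Rightarrow> 'a" and e :: 'a
  assumes "is_loop mult e"
    and "is_moufang mult"
    and "nucleus mult = {e}"
  shows "(\<forall>(p, q) \<in> sigma_graph mult. \<forall>(p', q') \<in> sigma_graph mult. p = p' \<longrightarrow> q = q')
         \<and> (\<forall>(p, q) \<in> sigma_graph mult. q \<in> Mlt mult)"
proof -
  interpret mloop mult e using assms(1,2) by unfold_locales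
  show ?thesis using det[OF assms(3)] inMlt by fast
qed

end
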